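(* For every positive integer $d$, the following identity holds in $K[t,z]$: \[\sum_{a\in A(d)}\chi_t(a)\,\frac{\ell_d E_d(z-a)}{z-a}=\sum_{j=0}^{d-1}b_j(t)E_j(z).\]
   Context: $A=\mathbb{F}_q[\theta]$, $K=\mathbb{F}_q(\theta)$; $\chi_t:A\to\mathbb{F}_q[t]$ the $\mathbb{F}_q$-algebra map with $\theta\mapsto t$. $b_j(t)=\prod_{i=0}^{j-1}(t-\theta^{q^i})$; $\ell_d=\prod_{j=1}^{d}(\theta-\theta^{q^j})$. $D_j$ is the product of all monic polynomials of degree $j$ in $A$. $A(d)$ is the set of elements of $A$ of degree $<d$ ($A(0)=\{0\}$), and $E_d(z)=D_d^{-1}\prod_{a\in A(d)}(z-a)$; note $E_d(z-a)/(z-a)$ is a polynomial in $z$ for $a\in A(d)$. *)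

theory Defs
  imports "HOL-Computational_Algebra.Computational_Algebra"
begin

text \<open>Setting: F_q is a finite field 'k with q = card (UNIV :: 'k set); A = 'k poly (variable theta);
K = 'k poly fract.  A polynomial in K[t,z] is represented as an element of
(K poly) poly: the outer variable is z, the coefficients lie in K[t].\<close>

definition thetaK :: "'k::{field,finite} poly fract" where
  "thetaK = to_fract [:0, 1:]"

definition Adeg :: "nat \<Rightarrow> 'k::{field,finite} poly set" where
  "Adeg d = {a. a = 0 \<or> degree a < d}"

definition Dprod :: "nat \<Rightarrow> 'k::{field,finite} poly" where
  "Dprod j = (\<Prod>a\<in>{a::'k poly. lead_coeff a = 1 \<and> degree a = j}. a)"

definition ell :: "nat \<Rightarrow> 'k::{field,finite} poly" where
  "ell d = (\<Prod>j\<in>{1..d}. [:0, 1:] - [:0, 1:] ^ (card (UNIV :: 'k set) ^ j))"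

definition Epoly :: "nat \<Rightarrow> 'k::{field,finite} poly fract poly" where
  "Epoly d = smult (inverse (to_fract (Dprod d)))
                (\<Prod>a\<in>Adeg d. [:- to_fract a, 1:])"

definition bpoly :: "nat \<Rightarrow> 'k::{field,finite} poly fract poly" where
  "bpoly j = (\<Prod>i<j. [:- (thetaK ^ (card (UNIV :: 'k set) ^ i)), 1:])"

text \<open>chi_t : A \<rightarrow> F_q[t] \<subseteq> K[t], theta \<mapsto> t.\<close>
definition chi_t :: "'k::{field,finite} poly \<Rightarrow> 'k poly fract poly" where
  "chi_t a = map_poly (\<lambda>c. to_fract [:c:]) a"

definition liftz :: "'k::{field,finite} poly fract poly \<Rightarrow> 'k poly fract poly poly" where
  "liftz p = map_poly (\<lambda>c. [:c:]) p"

end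

theory Submission
  imports Defs
begin

lemma to_fract_prod: "to_fract (prod f A) = (\<Prod>x\<in>A. to_fract (f x))"
  by (induction A rule: infinite_finite_induct) auto

lemma to_fract_power: "to_fract (x ^ n) = to_fract x ^ n"
  by (induction n) auto

lemma to_fract_of_nat: "to_fract (of_nat n) = of_nat n"
  by (induction n) auto

lemma card_k_ge2: "card (UNIV :: 'k::{field,finite} set) \<ge> 2"
proof -
  have "card {0::'k, 1} \<le> card (UNIV :: 'k set)" by (rule card_mono) auto
  thus ?thesis by simp
qed

lemma pow_card_eq: "(x::'k::{field,finite}) ^ card (UNIV :: 'k set) = x"
proof (cases "x = 0")
  case False
  have "x * (\<Prod>y\<in>UNIV-{0}. x * y) = x * x ^ (card (UNIV :: 'k set) - 1) * \<Prod>(UNIV-{0})"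
    by (simp add: prod.distrib mult_ac)
  also have "x * x ^ (card (UNIV :: 'k set) - 1) = x ^ Suc (card (UNIV :: 'k set) - 1)"
    by (subst power_Suc) auto
  also have "Suc (card (UNIV :: 'k set) - 1) = card (UNIV :: 'k set)"
    using finite_UNIV_card_ge_0[where ?'a = 'k] by simp
  also have "(\<Prod>y\<in>UNIV-{0}. x * y) = (\<Prod>y\<in>UNIV-{0}. y)"
    by (rule prod.reindex_bij_witness[of _ "\<lambda>y. y / x" "\<lambda>y. x * y"]) (use False in auto)
  finally show ?thesis
    by simp
qed (use finite_UNIV_card_ge_0[where ?'a = 'k] in auto)

lemma choose_card_zero:
  assumes "0 < i" "i < card (UNIV::'k::{field,finite} set)"
  shows "of_nat (card (UNIV::'k set) choose i) = (0::'k)"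
proof -
  define q where "q = card (UNIV::'k set)"
  define P :: "'k poly" where "P = (\<Sum>i\<in>{1..<q}. monom (of_nat (q choose i)) i)"
  have q2: "q \<ge> 2" using card_k_ge2[where 'k='k] q_def by simp
  have "poly P c = 0" for c
  proof -
    have "(c + 1) ^ q = (\<Sum>k\<le>q. of_nat (q choose k) * c ^ k * 1 ^ (q - k))"
      by (rule binomial_ring)
    also have "{..q} = insert 0 (insert q {1..<q})" using q2 by auto
    also have "(\<Sum>k\<in>insert 0 (insert q {1..<q}). of_nat (q choose k) * c ^ k * 1 ^ (q - k))
       = 1 + (c ^ q + (\<Sum>k\<in>{1..<q}. of_nat (q choose k) * c ^ k))"
      using q2 by (subst sum.insert; simp)+
    finally have "(c+1)^q = 1 + (c ^ q + poly P c)"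
      by (simp add: P_def poly_sum poly_monom)
    moreover have "(c+1)^q = c + 1" "c ^ q = c" using pow_card_eq q_def by blast+
    ultimately show ?thesis by simp
  qed
  have "degree P \<le> q - 1"
    unfolding P_def by (intro degree_sum_le) (auto intro: order.trans[OF degree_monom_le])
  hence "P = 0"
    using \<open>\<And>c. poly P c = 0\<close> q2
    by (intro poly_eqI_degree[where A=UNIV]) (auto simp: q_def)
  hence "coeff P i = 0" by simp
  moreover have "coeff P i = of_nat (q choose i)"
    unfolding P_def coeff_sum coeff_monom using assms q_def by (simp add: sum.delta)
  ultimately show ?thesis by (simp add: q_def)
qed

lemma freshman_gen:
  fixes x y :: "'a::comm_ring_1"
  assumes "\<And>i. 0 < i \<Longrightarrow> i < n \<Longrightarrow> of_nat (n choose i) = (0::'a)" "n > 0"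
  shows "(x+y)^n = x^n + y^n"
proof -
  have "(x + y) ^ n = (\<Sum>k\<le>n. of_nat (n choose k) * x ^ k * y ^ (n - k))"
    by (rule binomial_ring)
  also have "\<dots> = (\<Sum>k\<in>{0,n}. of_nat (n choose k) * x ^ k * y ^ (n - k))"
  proof (intro sum.mono_neutral_right ballI)
    fix k assume "k \<in> {..n} - {0, n}"
    hence k: "k > 0" "k < n" by auto
    thus "of_nat (n choose k) * x ^ k * y ^ (n - k) = 0" using assms(1)[OF k] by simp
  qed auto
  finally show ?thesis using \<open>n > 0\<close> by (simp add: add_ac)
qed

lemma of_nat_choose_K:
  assumes "0 < i" "i < card (UNIV::'k::{field,finite} set)"
  shows "of_nat (card (UNIV::'k set) choose i) = (0::'k poly fract)"
proof -
  have "(of_nat (card (UNIV::'k set) choose i) :: 'k poly fract)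
     = to_fract (of_nat (card (UNIV::'k set) choose i))" by (simp add: to_fract_of_nat)
  also have "\<dots> = to_fract [:of_nat (card (UNIV::'k set) choose i):]" by (simp add: of_nat_poly)
  also have "\<dots> = 0" using choose_card_zero[OF assms] by simp
  finally show ?thesis .
qed

lemma freshman_K:
  fixes x y :: "'k::{field,finite} poly fract"
  shows "(x+y)^(card (UNIV::'k set)) = x^card (UNIV::'k set) + y^card (UNIV::'k set)"
  by (rule freshman_gen) (use of_nat_choose_K[where 'k='k] card_k_ge2[where 'k='k] in auto)

lemma chi_t_pCons: "chi_t (pCons c a) = pCons (to_fract [:c:]) (chi_t a)"
  unfolding chi_t_def by (rule map_poly_pCons) simp

lemma chi_t_0[simp]: "chi_t 0 = 0"
  unfolding chi_t_def by simp

lemma chi_frob: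
  fixes a :: "'k::{field,finite} poly"
  shows "poly (chi_t a) (y ^ card (UNIV::'k set)) = (poly (chi_t a) y) ^ card (UNIV::'k set)"
proof (induction a)
  case 0
  then show ?case using card_k_ge2[where 'k='k] by (simp add: power_0_left)
next
  case (pCons c a)
  have "to_fract [:c:] ^ card (UNIV::'k set) = to_fract [:c:]"
    by (simp add: to_fract_power[symmetric] poly_const_pow pow_card_eq)
  then show ?case using pCons
    by (simp add: chi_t_pCons freshman_K power_mult_distrib)
qed

lemma chi_theta: "poly (chi_t a) thetaK = to_fract (a :: 'k::{field,finite} poly)"
proof (induction a)
  case (pCons c a)
  have "pCons c a = [:c:] + [:0,1:] * a" by simp
  hence "to_fract (pCons c a) = to_fract [:c:] + thetaK * to_fract a"
    unfolding thetaK_def by (metis to_fract_add to_fract_mult)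
  then show ?case using pCons by (simp add: chi_t_pCons)
qed simp

definition xn :: "nat \<Rightarrow> 'k::{field,finite} poly fract" where
  "xn k = thetaK ^ (card (UNIV::'k set) ^ k)"

lemma chi_xn: "poly (chi_t a) (xn k) = to_fract (a :: 'k::{field,finite} poly) ^ (card (UNIV::'k set) ^ k)"
proof (induction k)
  case 0 then show ?case by (simp add: xn_def chi_theta)
next
  case (Suc k)
  have "(xn (Suc k) :: 'k poly fract) = xn k ^ card (UNIV::'k set)"
    by (simp add: xn_def power_mult[symmetric] mult.commute)
  then show ?case using Suc by (simp add: chi_frob power_mult[symmetric] mult.commute)
qed

lemma xn_to_fract: "(xn k :: 'k::{field,finite} poly fract) = to_fract ([:0,1:] ^ (card (UNIV::'k set) ^ k))"
  by (simp add: xn_def thetaK_def to_fract_power)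

lemma inj_xn: "inj (xn :: nat \<Rightarrow> 'k::{field,finite} poly fract)"
proof (rule injI)
  fix k m assume "(xn k :: 'k poly fract) = xn m"
  hence "([:0,1:] :: 'k poly) ^ (card (UNIV::'k set) ^ k) = [:0,1:] ^ (card (UNIV::'k set) ^ m)"
    by (simp add: xn_to_fract)
  hence "degree (([:0,1:] :: 'k poly) ^ (card (UNIV::'k set) ^ k)) = degree (([:0,1:] :: 'k poly) ^ (card (UNIV::'k set) ^ m))" by simp
  hence "card (UNIV::'k set) ^ k = card (UNIV::'k set) ^ m"
    using degree_linear_power[of "0::'k"] by simp
  thus "k = m" using card_k_ge2[where 'k='k] by (simp add: power_inject_exp)
qed


lemma lin_prod:
  assumes "finite S"
  shows "degree (\<Prod>s\<in>S. [:- f s, 1:] :: 'a::field poly) = card S \<and> lead_coeff (\<Prod>s\<in>S. [:- f s, 1:] :: 'a::field poly) = 1"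
  using assms
proof (induction S rule: finite_induct)
  case (insert x F)
  have ne: "(\<Prod>s\<in>F. [:- f s, 1:] :: 'a poly) \<noteq> 0" using insert by auto
  have e: "(\<Prod>s\<in>insert x F. [:- f s, 1:]) = [:- f x, 1:] * (\<Prod>s\<in>F. [:- f s, 1:])"
    using insert by simp
  have l1: "lead_coeff (\<Prod>s\<in>insert x F. [:- f s, 1:]) = lead_coeff [:- f x, 1:] * lead_coeff (\<Prod>s\<in>F. [:- f s, 1:])"
    by (simp only: e lead_coeff_mult)
  have l2: "lead_coeff [:- f x, 1:] = 1" by simp
  have l3: "lead_coeff (\<Prod>s\<in>F. [:- f s, 1:]) = 1" using insert by blast
  have "lead_coeff (\<Prod>s\<in>insert x F. [:- f s, 1:]) = 1" by (simp only: l1 l2 l3 mult_1)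
  moreover have "degree (\<Prod>s\<in>insert x F. [:- f s, 1:]) = card (insert x F)"
    using insert ne e by (simp add: degree_mult_eq del: mult_pCons_left)
  ultimately show ?case by simp
qed simp

lemma lin_prod_coeff:
  assumes "finite S"
  shows "coeff (\<Prod>s\<in>S. [:- f s, 1:] :: 'a::field poly) (card S) = 1"
  using lin_prod[OF assms, of f] by metis

definition DD :: "(nat \<Rightarrow> 'f::field) \<Rightarrow> nat \<Rightarrow> (nat \<Rightarrow> 'f) \<Rightarrow> 'f" where
  "DD x n y = (\<Sum>k\<le>n. y k / (\<Prod>m\<in>{..n}-{k}. (x k - x m)))"

lemma DD_cong: "(\<And>k. k \<le> n \<Longrightarrow> y k = y' k) \<Longrightarrow> DD x n y = DD x n y'"
  unfolding DD_def by (intro sum.cong) auto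

lemma DD_coeff:
  fixes g :: "'f::field poly"
  assumes "inj x" "degree g \<le> n"
  shows "DD x n (\<lambda>k. poly g (x k)) = coeff g n"
proof -
  define c where "c k = poly g (x k) / (\<Prod>m\<in>{..n}-{k}. (x k - x m))" for k
  define L where "L = (\<Sum>k\<le>n. smult (c k) (\<Prod>m\<in>{..n}-{k}. [:- x m, 1:]))"
  have nz: "(\<Prod>m\<in>{..n}-{k}. (x k - x m)) \<noteq> 0" for k
    using assms(1) by (auto simp: inj_eq)
  have degL: "degree L \<le> n"
    unfolding L_def
  proof (intro degree_sum_le)
    fix k assume "k \<in> {..n}"
    have "degree (\<Prod>m\<in>{..n}-{k}. [:- x m, 1:]) = card ({..n}-{k})"
      using lin_prod[of "{..n}-{k}" x] by simp
    also have "\<dots> \<le> n" using \<open>k \<in> {..n}\<close> by simp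
    finally show "degree (smult (c k) (\<Prod>m\<in>{..n}-{k}. [:- x m, 1:])) \<le> n"
      by (rule order.trans[OF degree_smult_le])
  qed simp
  have evL: "poly L (x j) = poly g (x j)" if j: "j \<le> n" for j
  proof -
    have "poly L (x j) = (\<Sum>k\<le>n. c k * (\<Prod>m\<in>{..n}-{k}. (x j - x m)))"
      by (simp add: L_def poly_sum poly_prod)
    also have "\<dots> = (\<Sum>k\<in>{j}. c k * (\<Prod>m\<in>{..n}-{k}. (x j - x m)))"
    proof (intro sum.mono_neutral_right ballI)
      fix k assume "k \<in> {..n} - {j}"
      hence "j \<in> {..n}-{k}" using j by auto
      hence "(\<Prod>m\<in>{..n}-{k}. (x j - x m)) = 0"
        by (intro prod_zero) auto
      thus "c k * (\<Prod>m\<in>{..n}-{k}. (x j - x m)) = 0" by simp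
    qed (use j in auto)
    also have "\<dots> = poly g (x j)" using nz[of j] by (simp add: c_def)
    finally show ?thesis .
  qed
  have "L = g"
  proof (rule poly_eqI_degree[where A="x ` {..n}"])
    show "card (x ` {..n}) > degree L" "card (x ` {..n}) > degree g"
      using degL assms by (simp_all add: card_image inj_on_subset[OF assms(1)])
  qed (use evL in auto)
  hence "coeff g n = coeff L n" by simp
  also have "\<dots> = (\<Sum>k\<le>n. c k * coeff (\<Prod>m\<in>{..n}-{k}. [:- x m, 1:]) n)"
    by (simp add: L_def coeff_sum)
  also have "\<dots> = (\<Sum>k\<le>n. c k)"
  proof (intro sum.cong refl)
    fix k assume "k \<in> {..n}"
    hence "card ({..n}-{k}) = n" by simp
    thus "c k * coeff (\<Prod>m\<in>{..n}-{k}. [:- x m, 1:]) n = c k"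
      using lin_prod_coeff[of "{..n}-{k}" x] by simp
  qed
  finally show ?thesis by (simp add: DD_def c_def)
qed

lemma newton:
  fixes g :: "'f::field poly"
  assumes "inj x" "g = 0 \<or> degree g < n"
  shows "g = (\<Sum>j<n. smult (DD x j (\<lambda>k. poly g (x k))) (\<Prod>i<j. [:- x i, 1:]))"
  using assms(2)
proof (induction n arbitrary: g)
  case 0
  then show ?case by simp
next
  case (Suc n)
  define b where "b = (\<Prod>i<n. [:- x i, 1:])"
  define c where "c = coeff g n"
  define h where "h = g - smult c b"
  have degg: "degree g \<le> n" using Suc.prems by auto
  have lb: "degree b = n" "coeff b n = 1" using lin_prod[of "{..<n}" x] lin_prod_coeff[of "{..<n}" x] by (simp_all add: b_def)
  have cDD: "DD x n (\<lambda>k. poly g (x k)) = c"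
    using DD_coeff[OF assms(1) degg] by (simp add: c_def)
  have "h = 0 \<or> degree h < n"
  proof (cases "h = 0")
    case False
    have "degree h \<le> n" unfolding h_def
      using degg lb by (intro degree_diff_le) (auto intro: order.trans[OF degree_smult_le])
    moreover have "coeff h n = 0" using lb by (simp add: h_def c_def del: mult_pCons_left)
    ultimately have "degree h < n" using False
      by (metis le_neq_implies_less leading_coeff_0_iff)
    thus ?thesis by simp
  qed simp
  note IH = Suc.IH[OF this]
  have hg: "DD x j (\<lambda>k. poly h (x k)) = DD x j (\<lambda>k. poly g (x k))" if "j < n" for j
  proof (rule DD_cong)
    fix k assume "k \<le> j"
    hence "k \<in> {..<n}" using that by auto
    hence "poly b (x k) = 0" unfolding b_def poly_prod by (intro prod_zero) auto
    thus "poly h (x k) = poly g (x k)" by (simp add: h_def)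
  qed
  have "g = h + smult c b" by (simp add: h_def)
  also note IH
  also have "(\<Sum>j<n. smult (DD x j (\<lambda>k. poly h (x k))) (\<Prod>i<j. [:- x i, 1:]))
           = (\<Sum>j<n. smult (DD x j (\<lambda>k. poly g (x k))) (\<Prod>i<j. [:- x i, 1:]))"
    using hg by (intro sum.cong) auto
  finally show ?case using cDD by (simp add: b_def)
qed


lemma q_ge1: "card (UNIV :: 'k::{field,finite} set) \<ge> 1"
  using card_k_ge2[where 'k='k] by simp

definition Fpoly :: "nat \<Rightarrow> 'k::{field,finite} poly fract poly" where
  "Fpoly j = (\<Sum>k\<le>j. monom (1 / (\<Prod>m\<in>{..j}-{k}. (xn k - xn m))) (card (UNIV::'k set) ^ k))"

lemma poly_Fpoly: "poly (Fpoly j) y = DD xn j (\<lambda>k. y ^ (card (UNIV::'k set) ^ k))"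
  for y :: "'k::{field,finite} poly fract"
  by (simp add: Fpoly_def DD_def poly_sum poly_monom)

lemma degree_Fpoly: "degree (Fpoly j :: 'k::{field,finite} poly fract poly) \<le> card (UNIV::'k set) ^ j"
  unfolding Fpoly_def
  by (intro degree_sum_le) (auto intro!: order.trans[OF degree_monom_le] power_increasing q_ge1)

lemma degree_chi_t: "degree (chi_t a) = degree (a::'k::{field,finite} poly)"
  unfolding chi_t_def by (rule degree_map_poly) simp

lemma coeff_chi_t: "coeff (chi_t a) n = to_fract [:coeff (a::'k::{field,finite} poly) n:]"
  unfolding chi_t_def by (rule coeff_map_poly) simp

lemma Fpoly_Adeg:
  assumes "a \<in> Adeg j"
  shows "poly (Fpoly j) (to_fract a) = 0"
proof -
  have "poly (Fpoly j) (to_fract a) = DD xn j (\<lambda>k. poly (chi_t a) (xn k))"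
    by (simp add: poly_Fpoly chi_xn)
  also have "\<dots> = coeff (chi_t a) j"
    using assms by (intro DD_coeff[OF inj_xn]) (auto simp: degree_chi_t Adeg_def)
  also have "\<dots> = 0"
    using assms by (auto simp: coeff_chi_t Adeg_def coeff_eq_0)
  finally show ?thesis .
qed

lemma Fpoly_theta:
  "poly (Fpoly j) (thetaK ^ j :: 'k::{field,finite} poly fract) = 1"
proof -
  have "poly (Fpoly j) (thetaK ^ j :: 'k poly fract) = DD xn j (\<lambda>k. poly (monom 1 j) (xn k))"
    unfolding poly_Fpoly
    by (intro DD_cong) (simp add: xn_def poly_monom flip: power_mult add: mult.commute)
  also have "\<dots> = coeff (monom 1 j) j"
    by (intro DD_coeff[OF inj_xn] degree_monom_le)
  finally show ?thesis by simp
qed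

lemma Adeg_0: "Adeg 0 = {0}" by (auto simp: Adeg_def)

lemma zero_Adeg: "0 \<in> Adeg j" by (simp add: Adeg_def)

lemma Adeg_iff: "a \<in> Adeg j \<longleftrightarrow> (\<forall>k\<ge>j. coeff a k = 0)"
proof
  assume "a \<in> Adeg j" thus "\<forall>k\<ge>j. coeff a k = 0" by (auto simp: Adeg_def coeff_eq_0)
next
  assume h: "\<forall>k\<ge>j. coeff a k = 0"
  show "a \<in> Adeg j"
  proof (cases "a = 0")
    case False
    hence "degree a < j" using h by (intro degree_lessI) auto
    thus ?thesis by (simp add: Adeg_def)
  qed (simp add: Adeg_def)
qed

lemma Adeg_diff: "a \<in> Adeg j \<Longrightarrow> b \<in> Adeg j \<Longrightarrow> a - b \<in> Adeg j"
  by (simp add: Adeg_iff)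

lemma Adeg_Suc: "Adeg (Suc j) = (\<lambda>(a,c). a + monom c j) ` (Adeg j \<times> (UNIV :: 'k::{field,finite} set))"
proof (intro equalityI subsetI)
  fix b :: "'k poly" assume b: "b \<in> Adeg (Suc j)"
  define a where "a = b - monom (coeff b j) j"
  have "a \<in> Adeg j"
  proof (cases "a = 0")
    case False
    have "\<forall>k\<ge>j. coeff a k = 0"
    proof (intro allI impI)
      fix k assume "k \<ge> j"
      show "coeff a k = 0"
      proof (cases "k = j")
        case False
        hence "coeff b k = 0" using b \<open>k \<ge> j\<close> by (auto simp: Adeg_def coeff_eq_0)
        thus ?thesis using False by (simp add: a_def coeff_monom)
      qed (simp add: a_def)
    qed
    hence "degree a < j" using False by (intro degree_lessI) auto
    thus ?thesis by (simp add: Adeg_def)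
  qed (simp add: Adeg_def)
  moreover have "b = a + monom (coeff b j) j" by (simp add: a_def)
  ultimately show "b \<in> (\<lambda>(a,c). a + monom c j) ` (Adeg j \<times> UNIV)"
    by (intro image_eqI[where x="(a, coeff b j)"]) auto
next
  fix b :: "'k poly" assume "b \<in> (\<lambda>(a,c). a + monom c j) ` (Adeg j \<times> UNIV)"
  then obtain a c where ac: "a \<in> Adeg j" "b = a + monom c j" by auto
  show "b \<in> Adeg (Suc j)" using ac by (auto simp: Adeg_iff coeff_monom)
qed

lemma card_Adeg: "finite (Adeg j) \<and> card (Adeg j :: 'k::{field,finite} poly set) = card (UNIV::'k set) ^ j"
proof (induction j)
  case 0
  then show ?case by (simp add: Adeg_0)
next
  case (Suc j)
  have inj: "inj_on (\<lambda>(a,c). a + monom c j) (Adeg j \<times> (UNIV :: 'k set))"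
  proof (rule inj_onI, clarify)
    fix a c a' c' assume h: "a \<in> Adeg j" "a' \<in> Adeg j" "a + monom c j = a' + monom c' j"
    have "coeff (a + monom c j) j = coeff (a' + monom c' j) j" using h by simp
    moreover have "coeff a j = 0" "coeff a' j = 0" using h by (auto simp: Adeg_def coeff_eq_0)
    ultimately have "c = c'" by simp
    thus "a = a' \<and> c = c'" using h by simp
  qed
  show ?case using Suc inj
    by (simp add: Adeg_Suc card_image card_cartesian_product mult.commute)
qed

lemma finite_Adeg: "finite (Adeg j)" using card_Adeg by blast

lemma X_pow: "([:0,1:] :: 'a::comm_ring_1 poly) ^ j = monom 1 j"
  by (simp add: monom_altdef)

lemma Dprod_alt: "Dprod j = (\<Prod>a\<in>Adeg j. [:0,1:] ^ j - (a :: 'k::{field,finite} poly))"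
  unfolding Dprod_def
proof (rule prod.reindex_bij_witness[where i="\<lambda>a. [:0,1:] ^ j - a" and j="\<lambda>a. [:0,1:] ^ j - a"])
  fix a :: "'k poly" assume a: "a \<in> Adeg j"
  have c: "coeff ([:0,1:] ^ j - a) j = 1" "\<forall>k>j. coeff ([:0,1:] ^ j - a) k = 0"
    using a by (auto simp: X_pow Adeg_def coeff_eq_0 coeff_monom)
  hence "degree ([:0,1:] ^ j - a) = j"
    by (metis antisym degree_le le_degree one_neq_zero)
  with c show "[:0,1:] ^ j - a \<in> {a. lead_coeff a = 1 \<and> degree a = j}" by simp
next
  fix b :: "'k poly" assume b: "b \<in> {a. lead_coeff a = 1 \<and> degree a = j}"
  show "[:0,1:] ^ j - b \<in> Adeg j"
  proof (cases "[:0,1:] ^ j - b = 0")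
    case False
    have "\<forall>k\<ge>j. coeff ([:0,1:] ^ j - b) k = 0"
      using b by (auto simp: X_pow coeff_monom coeff_eq_0)
    hence "degree ([:0,1:] ^ j - b) < j" using False by (intro degree_lessI) auto
    thus ?thesis by (simp add: Adeg_def)
  qed (simp add: Adeg_def)
qed auto

lemma Dprod_nz: "Dprod j \<noteq> (0 :: 'k::{field,finite} poly)"
proof -
  have "[:0,1:] ^ j - a \<noteq> 0" if "a \<in> Adeg j" for a :: "'k poly"
  proof
    assume "[:0,1:] ^ j - a = 0"
    hence "coeff ([:0,1:] ^ j - a) j = 0" by simp
    thus False using that by (simp add: Adeg_iff X_pow)
  qed
  thus ?thesis unfolding Dprod_alt by (subst prod_zero_iff) (auto simp: finite_Adeg)
qed


lemma degree_Epoly: "degree (Epoly j :: 'k::{field,finite} poly fract poly) \<le> card (UNIV::'k set) ^ j"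
proof -
  have "degree (\<Prod>a\<in>Adeg j. [:- to_fract a, 1:] :: 'k poly fract poly) = card (Adeg j :: 'k poly set)"
    by (rule conjunct1[OF lin_prod[OF finite_Adeg]])
  thus ?thesis unfolding Epoly_def using card_Adeg[where 'k='k, of j]
    by (metis degree_smult_le order.trans order_refl)
qed

lemma Epoly_theta: "poly (Epoly j) (thetaK ^ j :: 'k::{field,finite} poly fract) = 1"
proof -
  have "poly (Epoly j) (thetaK ^ j :: 'k poly fract)
        = inverse (to_fract (Dprod j)) * (\<Prod>a\<in>Adeg j. thetaK ^ j - to_fract a)"
    by (simp add: Epoly_def poly_prod)
  also have "(\<Prod>a\<in>Adeg j. thetaK ^ j - to_fract a) = to_fract (Dprod j :: 'k poly)"
    by (simp add: Dprod_alt to_fract_prod thetaK_def to_fract_power)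
  finally show ?thesis using Dprod_nz[where 'k='k, of j] by simp
qed

lemma Epoly_Adeg: "a \<in> Adeg j \<Longrightarrow> poly (Epoly j) (to_fract a :: 'k::{field,finite} poly fract) = 0"
proof -
  assume a: "a \<in> Adeg j"
  have "(\<Prod>k\<in>Adeg j. poly [:- to_fract k, 1:] (to_fract a :: 'k poly fract)) = 0"
    by (rule prod_zero) (use a finite_Adeg in auto)
  thus ?thesis unfolding Epoly_def poly_smult poly_prod by simp
qed

lemma Epoly_eq_Fpoly: "Epoly j = (Fpoly j :: 'k::{field,finite} poly fract poly)"
proof (rule poly_eqI_degree[where A = "insert (thetaK ^ j) (to_fract ` Adeg j)"])
  fix y :: "'k poly fract" assume "y \<in> insert (thetaK ^ j) (to_fract ` Adeg j)"
  thus "poly (Epoly j) y = poly (Fpoly j) y"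
    by (auto simp: Epoly_theta Fpoly_theta Epoly_Adeg Fpoly_Adeg)
next
  have nin: "thetaK ^ j \<notin> to_fract ` (Adeg j :: 'k poly set)"
  proof
    assume "thetaK ^ j \<in> to_fract ` (Adeg j :: 'k poly set)"
    then obtain a :: "'k poly" where a: "a \<in> Adeg j" "thetaK ^ j = to_fract a" by auto
    hence "a = [:0,1:] ^ j" by (simp add: thetaK_def to_fract_power[symmetric])
    moreover have "coeff a j = 0" using a(1) by (simp add: Adeg_iff)
    ultimately show False by (simp add: X_pow)
  qed
  have "card (insert (thetaK ^ j :: 'k poly fract) (to_fract ` Adeg j)) = Suc (card (UNIV::'k set) ^ j)"
  proof -
    have fin: "finite (to_fract ` (Adeg j :: 'k poly set))" by (rule finite_imageI[OF finite_Adeg])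
    have "card (to_fract ` (Adeg j :: 'k poly set)) = card (Adeg j :: 'k poly set)"
      by (rule card_image) (simp add: inj_on_def)
    moreover have c: "card (Adeg j :: 'k poly set) = card (UNIV::'k set) ^ j" using card_Adeg by blast
    ultimately show ?thesis using nin fin by (simp add: card_insert_disjoint)
  qed
  thus "degree (Epoly j :: 'k poly fract poly) < card (insert (thetaK ^ j :: 'k poly fract) (to_fract ` Adeg j))"
       "degree (Fpoly j :: 'k poly fract poly) < card (insert (thetaK ^ j :: 'k poly fract) (to_fract ` Adeg j))"
    using degree_Epoly[where 'k='k, of j] degree_Fpoly[where 'k='k, of j] by simp_all
qed


lemma coeff_Fpoly_1:
  "coeff (Fpoly d) 1 = 1 / (\<Prod>m\<in>{..d}-{0}. (xn 0 - xn m) :: 'k::{field,finite} poly fract)"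
proof -
  have e: "card (UNIV::'k set) ^ k = 1 \<longleftrightarrow> k = 0" for k
    using card_k_ge2[where 'k='k] by (simp add: power_eq_1_iff)
  have "coeff (Fpoly d :: 'k poly fract poly) 1
      = (\<Sum>k\<le>d. if k = 0 then 1 / (\<Prod>m\<in>{..d}-{k}. (xn k - xn m)) else 0)"
    unfolding Fpoly_def coeff_sum coeff_monom e by simp
  also have "\<dots> = 1 / (\<Prod>m\<in>{..d}-{0}. (xn 0 - xn m))"
    by (simp add: sum.delta)
  finally show ?thesis .
qed

lemma ell_xn: "to_fract (ell d) = (\<Prod>m\<in>{..d}-{0}. (xn 0 - xn m) :: 'k::{field,finite} poly fract)"
proof -
  have "{..d}-{0} = {1..d}" by auto
  thus ?thesis
    by (simp add: ell_def to_fract_prod xn_to_fract to_fract_power)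
qed

lemma ell_nz: "to_fract (ell d :: 'k::{field,finite} poly) \<noteq> 0"
  unfolding ell_xn using inj_xn[where 'k='k]
  by (subst prod_zero_iff) (auto simp: inj_eq)

definition Rpoly :: "nat \<Rightarrow> 'k::{field,finite} poly fract poly" where
  "Rpoly d = smult (inverse (to_fract (Dprod d))) (\<Prod>a\<in>Adeg d - {0}. [:- to_fract a, 1:])"

lemma Epoly_R: "Epoly d = [:0,1:] * (Rpoly d :: 'k::{field,finite} poly fract poly)"
proof -
  have "(\<Prod>a\<in>Adeg d. [:- to_fract a, 1:] :: 'k poly fract poly)
        = [:- to_fract 0, 1:] * (\<Prod>a\<in>Adeg d - {0}. [:- to_fract a, 1:])"
    by (rule prod.remove[OF finite_Adeg zero_Adeg])
  thus ?thesis by (simp add: Epoly_def Rpoly_def del: mult_pCons_left)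
qed

lemma Rpoly_0: "poly (Rpoly d) 0 = inverse (to_fract (ell d :: 'k::{field,finite} poly))"
proof -
  have "poly (Rpoly d :: 'k poly fract poly) 0 = coeff (Epoly d) 1"
    by (simp add: Epoly_R poly_0_coeff_0)
  also have "\<dots> = coeff (Fpoly d) 1" by (simp only: Epoly_eq_Fpoly)
  also have "\<dots> = 1 / (\<Prod>m\<in>{..d}-{0}. (xn 0 - xn m))" by (rule coeff_Fpoly_1)
  also have "\<dots> = inverse (to_fract (ell d :: 'k poly))"
    by (simp only: ell_xn inverse_eq_divide)
  finally show ?thesis .
qed

lemma degree_Rpoly: "degree (Rpoly d :: 'k::{field,finite} poly fract poly) \<le> card (UNIV::'k set) ^ d - 1"
proof -
  have "degree (\<Prod>a\<in>Adeg d - {0}. [:- to_fract a, 1:] :: 'k poly fract poly) = card (Adeg d - {0} :: 'k poly set)"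
    by (rule conjunct1[OF lin_prod]) (simp add: finite_Adeg)
  also have "\<dots> = card (UNIV::'k set) ^ d - 1"
  proof -
    have "card (Adeg d - {0} :: 'k poly set) = card (Adeg d :: 'k poly set) - 1"
      by (rule card_Diff_singleton) (rule zero_Adeg)
    moreover have "card (Adeg d :: 'k poly set) = card (UNIV::'k set) ^ d" using card_Adeg by blast
    ultimately show ?thesis by simp
  qed
  finally show ?thesis unfolding Rpoly_def by (metis degree_smult_le)
qed

lemma Q_eq:
  "(Epoly d \<circ>\<^sub>p [:- c, 1:]) div [:- c, 1:] = Rpoly d \<circ>\<^sub>p [:- c, 1:]"
  for c :: "'k::{field,finite} poly fract"
proof -
  have "Epoly d \<circ>\<^sub>p [:- c, 1:] = [:- c, 1:] * (Rpoly d \<circ>\<^sub>p [:- c, 1:])"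
    by (simp add: Epoly_R pcompose_mult pcompose_pCons del: mult_pCons_left)
  thus ?thesis by (simp del: mult_pCons_left)
qed

lemma poly_Q:
  assumes "a \<in> Adeg d" "b \<in> Adeg d"
  shows "poly ((Epoly d \<circ>\<^sub>p [:- to_fract a, 1:]) div [:- to_fract a, 1:]) (to_fract b)
         = (if a = b then inverse (to_fract (ell d)) else (0 :: 'k::{field,finite} poly fract))"
proof -
  have "poly ((Epoly d \<circ>\<^sub>p [:- to_fract a, 1:]) div [:- to_fract a, 1:]) (to_fract b)
        = poly (Rpoly d) (to_fract (b - a) :: 'k poly fract)"
    by (simp add: Q_eq poly_pcompose)
  also have "\<dots> = (if a = b then inverse (to_fract (ell d)) else 0)"
  proof (cases "a = b")
    case True thus ?thesis by (simp add: Rpoly_0)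
  next
    case False
    hence "b - a \<in> Adeg d - {0}" using assms Adeg_diff by auto
    have "(\<Prod>x\<in>Adeg d - {0}. poly [:- to_fract x, 1:] (to_fract (b - a) :: 'k poly fract)) = 0"
    proof (rule prod_zero)
      show "finite (Adeg d - {0} :: 'k poly set)" by (simp add: finite_Adeg)
      show "\<exists>x\<in>Adeg d - {0}. poly [:- to_fract x, 1:] (to_fract (b - a) :: 'k poly fract) = 0"
        using \<open>b - a \<in> Adeg d - {0}\<close> by (intro bexI[where x="b-a"]) auto
    qed
    thus ?thesis using False unfolding Rpoly_def poly_smult poly_prod by simp
  qed
  finally show ?thesis .
qed

lemma liftz_pCons: "liftz (pCons c p) = pCons [:c:] (liftz p)"
  unfolding liftz_def by (rule map_poly_pCons) simp

lemma liftz_0: "liftz 0 = 0" by (simp add: liftz_def)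

lemma poly_liftz: "poly (liftz p) [:y:] = [:poly p y:]"
  by (induction p) (simp_all add: liftz_pCons liftz_0)

lemma degree_liftz: "degree (liftz p) = degree p"
  unfolding liftz_def by (rule degree_map_poly) simp


lemma bpoly_xn: "bpoly j = (\<Prod>i<j. [:- xn i, 1:] :: 'k::{field,finite} poly fract poly)"
  by (simp add: bpoly_def xn_def)

theorem corollary2p6:
  fixes d :: nat
  assumes "d \<ge> 1"
  shows "(\<Sum>a\<in>(Adeg d :: 'k::{field,finite} poly set).
            smult (chi_t a)
              (liftz (smult (to_fract (ell d))
                 ((Epoly d \<circ>\<^sub>p [:- to_fract a, 1:]) div [:- to_fract a, 1:]))))
         = (\<Sum>j<d. smult (bpoly j) (liftz (Epoly j :: 'k poly fract poly)))"
    (is "?L = ?R")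
proof (rule poly_eqI_degree[where A = "(\<lambda>b. [:to_fract b:]) ` (Adeg d :: 'k poly set)"])
  define N where "N = card (UNIV::'k set) ^ d"
  have q2: "card (UNIV::'k set) \<ge> 2" by (rule card_k_ge2)
  have cardA: "card ((\<lambda>b. [:to_fract b:]) ` (Adeg d :: 'k poly set) :: 'k poly fract poly set) = N"
  proof -
    have "card ((\<lambda>b. [:to_fract b:]) ` (Adeg d :: 'k poly set) :: 'k poly fract poly set) = card (Adeg d :: 'k poly set)"
      by (rule card_image) (simp add: inj_on_def)
    moreover have "card (Adeg d :: 'k poly set) = card (UNIV::'k set) ^ d" using card_Adeg by blast
    ultimately show ?thesis using N_def by simp
  qed
  have Npos: "N \<ge> 1" using q2 by (simp add: N_def)
  have "degree ?L \<le> N - 1"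
  proof (intro degree_sum_le)
    fix a :: "'k poly" assume "a \<in> Adeg d"
    have "degree ((Epoly d \<circ>\<^sub>p [:- to_fract a, 1:]) div [:- to_fract a, 1:]) \<le> N - 1"
      unfolding Q_eq using degree_Rpoly[where 'k='k, of d] by (simp add: degree_pcompose N_def)
    hence "degree (liftz (smult (to_fract (ell d))
            ((Epoly d \<circ>\<^sub>p [:- to_fract a, 1:]) div [:- to_fract a, 1:]))) \<le> N - 1"
      unfolding degree_liftz by (rule order.trans[OF degree_smult_le])
    thus "degree (smult (chi_t a) (liftz (smult (to_fract (ell d))
            ((Epoly d \<circ>\<^sub>p [:- to_fract a, 1:]) div [:- to_fract a, 1:])))) \<le> N - 1"
      by (rule order.trans[OF degree_smult_le])
  qed (simp add: finite_Adeg)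
  thus "degree ?L < card ((\<lambda>b. [:to_fract b:]) ` (Adeg d :: 'k poly set))"
    using cardA Npos by simp
  have "degree ?R \<le> N - 1"
  proof (intro degree_sum_le)
    fix j assume "j \<in> {..<d}"
    hence "card (UNIV::'k set) ^ j < N" unfolding N_def using q2 by (intro power_strict_increasing) auto
    hence "degree (Epoly j :: 'k poly fract poly) \<le> N - 1" using degree_Epoly[where 'k='k, of j] by simp
    hence "degree (liftz (Epoly j :: 'k poly fract poly)) \<le> N - 1" by (simp only: degree_liftz)
    thus "degree (smult (bpoly j) (liftz (Epoly j :: 'k poly fract poly))) \<le> N - 1"
      by (rule order.trans[OF degree_smult_le])
  qed simp
  thus "degree ?R < card ((\<lambda>b. [:to_fract b:]) ` (Adeg d :: 'k poly set))"
    using cardA Npos by simp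
next
  fix w assume "w \<in> (\<lambda>b. [:to_fract b:]) ` (Adeg d :: 'k poly set)"
  then obtain b :: "'k poly" where b: "b \<in> Adeg d" "w = [:to_fract b:]" by auto
  have "poly ?L w = (\<Sum>a\<in>Adeg d. chi_t a * [:(if a = b then 1 else 0):])"
    unfolding poly_sum
  proof (intro sum.cong refl)
    fix a :: "'k poly" assume a: "a \<in> Adeg d"
    show "poly (smult (chi_t a) (liftz (smult (to_fract (ell d))
            ((Epoly d \<circ>\<^sub>p [:- to_fract a, 1:]) div [:- to_fract a, 1:])))) w
          = chi_t a * [:(if a = b then 1 else 0):]"
      using a b ell_nz[where 'k='k, of d] by (simp add: poly_liftz poly_Q)
  qed
  also have "\<dots> = (\<Sum>a\<in>Adeg d. if a = b then chi_t a else 0)"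
    by (intro sum.cong refl) simp
  also have "\<dots> = chi_t b" using b by (simp add: finite_Adeg)
  also have "chi_t b = (\<Sum>j<d. smult (DD xn j (\<lambda>k. poly (chi_t b) (xn k))) (\<Prod>i<j. [:- xn i, 1:]))"
    by (rule newton[OF inj_xn]) (use b in \<open>auto simp: degree_chi_t Adeg_def\<close>)
  also have "\<dots> = poly ?R w"
  proof -
    have "poly ?R w = (\<Sum>j<d. bpoly j * [:poly (Fpoly j) (to_fract b):])"
      unfolding poly_sum by (intro sum.cong refl) (simp add: b poly_liftz Epoly_eq_Fpoly)
    also have "\<dots> = (\<Sum>j<d. smult (DD xn j (\<lambda>k. poly (chi_t b) (xn k))) (\<Prod>i<j. [:- xn i, 1:]))"
      by (intro sum.cong refl) (simp add: poly_Fpoly chi_xn bpoly_xn)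
    finally show ?thesis by simp
  qed
  finally show "poly ?L w = poly ?R w" .
qed

end
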